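(* Let $G$ be a finite group acting linearly on $V\cong\mathbb{C}^n$. If $\alpha$ and $\beta$ are $G$-invariant $2$-cochains with $\beta$ linear and $\alpha$ linear or constant, then $\phi(\alpha,\beta)$ and $\psi(\alpha)$ are $G$-invariant. Specifically, for all $g,h,x,y\in G$ and $v_1,v_2,v_3\in V$, $$h\cdot(\phi_{x,y}(v_1,v_2,v_3))=\phi_{hxh^{-1},hyh^{-1}}(hv_1,hv_2,hv_3),$$ $$h\cdot(\phi_g(v_1,v_2,v_3))=\phi_{hgh^{-1}}(hv_1,hv_2,hv_3),\qquad h\cdot(\psi_g(v_1,v_2,v_3))=\psi_{hgh^{-1}}(hv_1,hv_2,hv_3).$$
   Context: A linear (resp. constant) 2-cochain is $\alpha=\sum_g\alpha_gg$ with $\alpha_g:\bigwedge^2V\to V$ (resp. $\to\mathbb{C}$) linear; it is $G$-invariant if $h(\alpha_g(v,w))=\alpha_{hgh^{-1}}(hv,hw)$ for all $g,h,v,w$. For such $\alpha$, $\psi(\alpha)=\sum_g\psi_gg$ with $\psi_g(v_1,v_2,v_3)=\alpha_g(v_1,v_2)(gv_3-v_3)+\alpha_g(v_2,v_3)(gv_1-v_1)+\alpha_g(v_3,v_1)(gv_2-v_2)\in S(V)$. For $\alpha$ linear or constant and $\beta$ linear, $\phi(\alpha,\beta)=\sum_g\phi_gg$ with $\phi_g=\sum_{xy=g}\phi_{x,y}$ and $\phi_{x,y}(v_1,v_2,v_3)=\alpha_x(v_1+yv_1,\beta_y(v_2,v_3))+\alpha_x(v_2+yv_2,\beta_y(v_3,v_1))+\alpha_x(v_3+yv_3,\beta_y(v_1,v_2))$.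 $G$ acts on $S(V)$ by algebra automorphisms extending its action on $V$ (and trivially on $\mathbb{C}$). A 3-cochain $\sum_g\gamma_gg$ is $G$-invariant if $h(\gamma_g(v_1,v_2,v_3))=\gamma_{hgh^{-1}}(hv_1,hv_2,hv_3)$. *)

theory Defs
  imports "HOL-Analysis.Analysis" "HOL-Library.Poly_Mapping" "HOL-Algebra.Group"
begin

text \<open>S(V) is the polynomial ring C[x_i | i :: 'n], represented
  with Poly_Mapping as (monomial => coefficient); a vector v is identified with the
  linear polynomial sum_i v_i x_i, and a scalar c with the constant polynomial c.\<close>

type_synonym 'n symalg = "('n \<Rightarrow>\<^sub>0 nat) \<Rightarrow>\<^sub>0 complex"

definition vecS :: "complex^'n::finite \<Rightarrow> 'n symalg" where
  "vecS v = (\<Sum>i\<in>UNIV. Poly_Mapping.single (Poly_Mapping.single i 1) (v $ i))"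

definition constS :: "complex \<Rightarrow> 'n symalg" where
  "constS c = Poly_Mapping.single 0 c"

abbreviation clinV :: "(complex^'n::finite \<Rightarrow> complex^'n) \<Rightarrow> bool" where
  "clinV f \<equiv> Vector_Spaces.linear (*s) (*s) f"

abbreviation clinC :: "(complex^'n::finite \<Rightarrow> complex) \<Rightarrow> bool" where
  "clinC f \<equiv> Vector_Spaces.linear (*s) (*) f"

text \<open>Linear maps on \<Lambda>^2 V = alternating bilinear maps.\<close>
definition alt_bilinV :: "(complex^'n::finite \<Rightarrow> complex^'n \<Rightarrow> complex^'n) \<Rightarrow> bool" where
  "alt_bilinV f \<longleftrightarrow> (\<forall>w. clinV (\<lambda>v. f v w)) \<and> (\<forall>v. clinV (f v)) \<and> (\<forall>v. f v v = 0)"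

definition alt_bilinC :: "(complex^'n::finite \<Rightarrow> complex^'n \<Rightarrow> complex) \<Rightarrow> bool" where
  "alt_bilinC f \<longleftrightarrow> (\<forall>w. clinC (\<lambda>v. f v w)) \<and> (\<forall>v. clinC (f v)) \<and> (\<forall>v. f v v = 0)"

definition lin_action :: "('g, 'b) monoid_scheme \<Rightarrow> ('g \<Rightarrow> complex^'n::finite \<Rightarrow> complex^'n) \<Rightarrow> bool" where
  "lin_action G \<rho> \<longleftrightarrow> group G \<and> finite (carrier G) \<and>
     (\<forall>g\<in>carrier G. clinV (\<rho> g)) \<and> \<rho> \<one>\<^bsub>G\<^esub> = id \<and>
     (\<forall>g\<in>carrier G. \<forall>h\<in>carrier G. \<rho> (g \<otimes>\<^bsub>G\<^esub> h) = \<rho> g \<circ> \<rho> h)"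

text \<open>actS is the action of G on S(V) by algebra automorphisms extending the action on V
  (and trivial on C); such actS exists and is unique.\<close>
definition S_action :: "('g, 'b) monoid_scheme \<Rightarrow> ('g \<Rightarrow> complex^'n::finite \<Rightarrow> complex^'n)
     \<Rightarrow> ('g \<Rightarrow> 'n symalg \<Rightarrow> 'n symalg) \<Rightarrow> bool" where
  "S_action G \<rho> actS \<longleftrightarrow> (\<forall>h\<in>carrier G.
      bij (actS h) \<and>
      (\<forall>p q. actS h (p + q) = actS h p + actS h q) \<and>
      (\<forall>p q. actS h (p * q) = actS h p * actS h q) \<and>
      (\<forall>c. actS h (constS c) = constS c) \<and>
      (\<forall>v. actS h (vecS v) = vecS (\<rho> h v)))"

abbreviation conj :: "('g, 'b) monoid_scheme \<Rightarrow> 'g \<Rightarrow> 'g \<Rightarrow> 'g" where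
  "conj G h g \<equiv> h \<otimes>\<^bsub>G\<^esub> g \<otimes>\<^bsub>G\<^esub> inv\<^bsub>G\<^esub> h"

definition inv_linear :: "('g, 'b) monoid_scheme \<Rightarrow> ('g \<Rightarrow> complex^'n::finite \<Rightarrow> complex^'n)
     \<Rightarrow> ('g \<Rightarrow> complex^'n \<Rightarrow> complex^'n \<Rightarrow> complex^'n) \<Rightarrow> bool" where
  "inv_linear G \<rho> \<alpha> \<longleftrightarrow> (\<forall>g\<in>carrier G. \<forall>h\<in>carrier G. \<forall>v w.
      \<rho> h (\<alpha> g v w) = \<alpha> (conj G h g) (\<rho> h v) (\<rho> h w))"

definition inv_const :: "('g, 'b) monoid_scheme \<Rightarrow> ('g \<Rightarrow> complex^'n::finite \<Rightarrow> complex^'n)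
     \<Rightarrow> ('g \<Rightarrow> complex^'n \<Rightarrow> complex^'n \<Rightarrow> complex) \<Rightarrow> bool" where
  "inv_const G \<rho> \<alpha> \<longleftrightarrow> (\<forall>g\<in>carrier G. \<forall>h\<in>carrier G. \<forall>v w.
      \<alpha> g v w = \<alpha> (conj G h g) (\<rho> h v) (\<rho> h w))"

text \<open>psi and phi, with values in S(V); the parameter e is the embedding of the
  value space of alpha (V via vecS in the linear case, C via constS in the constant case).\<close>
definition psi :: "('a \<Rightarrow> 'n symalg) \<Rightarrow> ('g \<Rightarrow> complex^'n::finite \<Rightarrow> complex^'n)
     \<Rightarrow> ('g \<Rightarrow> complex^'n \<Rightarrow> complex^'n \<Rightarrow> 'a) \<Rightarrow> 'g
     \<Rightarrow> complex^'n \<Rightarrow> complex^'n \<Rightarrow> complex^'n \<Rightarrow> 'n symalg" where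
  "psi e \<rho> \<alpha> g v1 v2 v3 =
     e (\<alpha> g v1 v2) * vecS (\<rho> g v3 - v3) + e (\<alpha> g v2 v3) * vecS (\<rho> g v1 - v1)
     + e (\<alpha> g v3 v1) * vecS (\<rho> g v2 - v2)"

definition phi_xy :: "('a \<Rightarrow> 'n symalg) \<Rightarrow> ('g \<Rightarrow> complex^'n::finite \<Rightarrow> complex^'n)
     \<Rightarrow> ('g \<Rightarrow> complex^'n \<Rightarrow> complex^'n \<Rightarrow> 'a)
     \<Rightarrow> ('g \<Rightarrow> complex^'n \<Rightarrow> complex^'n \<Rightarrow> complex^'n) \<Rightarrow> 'g \<Rightarrow> 'g
     \<Rightarrow> complex^'n \<Rightarrow> complex^'n \<Rightarrow> complex^'n \<Rightarrow> 'n symalg" where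
  "phi_xy e \<rho> \<alpha> \<beta> x y v1 v2 v3 =
     e (\<alpha> x (v1 + \<rho> y v1) (\<beta> y v2 v3)) + e (\<alpha> x (v2 + \<rho> y v2) (\<beta> y v3 v1))
     + e (\<alpha> x (v3 + \<rho> y v3) (\<beta> y v1 v2))"

definition phi :: "('g, 'b) monoid_scheme \<Rightarrow> ('a \<Rightarrow> 'n symalg) \<Rightarrow> ('g \<Rightarrow> complex^'n::finite \<Rightarrow> complex^'n)
     \<Rightarrow> ('g \<Rightarrow> complex^'n \<Rightarrow> complex^'n \<Rightarrow> 'a)
     \<Rightarrow> ('g \<Rightarrow> complex^'n \<Rightarrow> complex^'n \<Rightarrow> complex^'n) \<Rightarrow> 'g
     \<Rightarrow> complex^'n \<Rightarrow> complex^'n \<Rightarrow> complex^'n \<Rightarrow> 'n symalg" where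
  "phi G e \<rho> \<alpha> \<beta> g v1 v2 v3 =
     (\<Sum>(x,y)\<in>{(x,y). x \<in> carrier G \<and> y \<in> carrier G \<and> x \<otimes>\<^bsub>G\<^esub> y = g}.
        phi_xy e \<rho> \<alpha> \<beta> x y v1 v2 v3)"

end

theory Submission imports Defs begin

lemma clin_add: "clinV f \<Longrightarrow> f (a + b) = f a + f b" by (simp add: Vector_Spaces.linear_iff)
lemma clin_diff: "clinV f \<Longrightarrow> f (a - b) = f a - f b"
  by (metis clin_add diff_add_cancel eq_diff_eq)

lemma actS_sum:
  fixes A :: "'a::ab_group_add \<Rightarrow> 'b::ab_group_add"
  assumes add: "\<forall>p q. A (p + q) = A p + A q"
  shows "A (sum f S) = (\<Sum>s\<in>S. A (f s))"
proof -
  have z: "A 0 = 0" using add[rule_format, of 0 0] by simp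
  show ?thesis
  proof (cases "finite S")
    case True thus ?thesis by (induction S rule: finite_induct) (auto simp: z add)
  next
    case False thus ?thesis by (simp add: z)
  qed
qed

lemma conj_rho:
  assumes "lin_action G \<rho>" "h \<in> carrier G" "y \<in> carrier G"
  shows "\<rho> (conj G h y) (\<rho> h v) = \<rho> h (\<rho> y v)"
proof -
  interpret group G using assms(1) by (simp add: lin_action_def)
  have m: "\<forall>g\<in>carrier G. \<forall>k\<in>carrier G. \<rho> (g \<otimes>\<^bsub>G\<^esub> k) = \<rho> g \<circ> \<rho> k" using assms(1) by (simp add: lin_action_def)
  have "conj G h y \<otimes>\<^bsub>G\<^esub> h = h \<otimes>\<^bsub>G\<^esub> y" using assms by (simp add: m_assoc)
  hence "\<rho> (conj G h y \<otimes>\<^bsub>G\<^esub> h) = \<rho> (h \<otimes>\<^bsub>G\<^esub> y)" by simp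
  thus ?thesis using m assms by (metis comp_apply inv_closed m_closed)
qed

lemma conj_bij:
  assumes "group G" "h \<in> carrier G" "g \<in> carrier G"
  shows "bij_betw (\<lambda>(x,y). (conj G h x, conj G h y))
     {(x,y). x \<in> carrier G \<and> y \<in> carrier G \<and> x \<otimes>\<^bsub>G\<^esub> y = g}
     {(x,y). x \<in> carrier G \<and> y \<in> carrier G \<and> x \<otimes>\<^bsub>G\<^esub> y = conj G h g}"
proof -
  interpret group G by fact
  have lc1: "inv\<^bsub>G\<^esub> x \<otimes>\<^bsub>G\<^esub> (x \<otimes>\<^bsub>G\<^esub> z) = z" if "x \<in> carrier G" "z \<in> carrier G" for x z
    using that by (simp add: m_assoc[symmetric])
  have lc2: "x \<otimes>\<^bsub>G\<^esub> (inv\<^bsub>G\<^esub> x \<otimes>\<^bsub>G\<^esub> z) = z" if "x \<in> carrier G" "z \<in> carrier G" for x z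
    using that by (simp add: m_assoc[symmetric])
  have cm: "conj G h x \<otimes>\<^bsub>G\<^esub> conj G h y = conj G h (x \<otimes>\<^bsub>G\<^esub> y)" if "x \<in> carrier G" "y \<in> carrier G" for x y
    using that assms by (simp add: m_assoc lc1 lc2)
  have bk1: "conj G h (conj G (inv\<^bsub>G\<^esub> h) x) = x" if "x \<in> carrier G" for x
    using that assms by (simp add: m_assoc[symmetric]) (simp add: m_assoc lc1 lc2)
  have bk2: "conj G (inv\<^bsub>G\<^esub> h) (conj G h x) = x" if "x \<in> carrier G" for x
    using that assms by (simp add: m_assoc[symmetric]) (simp add: m_assoc lc1 lc2)
  show ?thesis
  proof (rule bij_betw_byWitness[where f'="\<lambda>(x,y). (conj G (inv\<^bsub>G\<^esub> h) x, conj G (inv\<^bsub>G\<^esub> h) y)"])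
    show "\<forall>a\<in>{(x,y). x \<in> carrier G \<and> y \<in> carrier G \<and> x \<otimes>\<^bsub>G\<^esub> y = g}.
       (\<lambda>(x,y). (conj G (inv\<^bsub>G\<^esub> h) x, conj G (inv\<^bsub>G\<^esub> h) y)) ((\<lambda>(x,y). (conj G h x, conj G h y)) a) = a"
      using bk2 by auto
    show "\<forall>a\<in>{(x,y). x \<in> carrier G \<and> y \<in> carrier G \<and> x \<otimes>\<^bsub>G\<^esub> y = conj G h g}.
       (\<lambda>(x,y). (conj G h x, conj G h y)) ((\<lambda>(x,y). (conj G (inv\<^bsub>G\<^esub> h) x, conj G (inv\<^bsub>G\<^esub> h) y)) a) = a"
      using bk1 by auto
    show "(\<lambda>(x,y). (conj G h x, conj G h y)) ` {(x,y). x \<in> carrier G \<and> y \<in> carrier G \<and> x \<otimes>\<^bsub>G\<^esub> y = g}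
       \<subseteq> {(x,y). x \<in> carrier G \<and> y \<in> carrier G \<and> x \<otimes>\<^bsub>G\<^esub> y = conj G h g}"
      using cm assms by auto
    have "conj G (inv\<^bsub>G\<^esub> h) x \<otimes>\<^bsub>G\<^esub> conj G (inv\<^bsub>G\<^esub> h) y = g" if "x \<in> carrier G" "y \<in> carrier G" "x \<otimes>\<^bsub>G\<^esub> y = conj G h g" for x y
    proof -
      have "conj G (inv\<^bsub>G\<^esub> h) x \<otimes>\<^bsub>G\<^esub> conj G (inv\<^bsub>G\<^esub> h) y = conj G (inv\<^bsub>G\<^esub> h) (x \<otimes>\<^bsub>G\<^esub> y)"
        using that(1,2) assms by (simp add: m_assoc lc1 lc2)
      thus ?thesis using that bk2 assms by simp
    qed
    thus "(\<lambda>(x,y). (conj G (inv\<^bsub>G\<^esub> h) x, conj G (inv\<^bsub>G\<^esub> h) y)) ` {(x,y). x \<in> carrier G \<and> y \<in> carrier G \<and> x \<otimes>\<^bsub>G\<^esub> y = conj G h g}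
       \<subseteq> {(x,y). x \<in> carrier G \<and> y \<in> carrier G \<and> x \<otimes>\<^bsub>G\<^esub> y = g}"
      using assms by auto
  qed
qed
lemma phi_gen:
  assumes act: "lin_action G \<rho>" and h: "h \<in> carrier G"
    and add: "\<forall>p q. A (p + q) = A p + A q"
    and xy: "\<forall>x\<in>carrier G. \<forall>y\<in>carrier G. \<forall>v1 v2 v3.
          A (phi_xy e \<rho> \<alpha> \<beta> x y v1 v2 v3)
            = phi_xy e \<rho> \<alpha> \<beta> (conj G h x) (conj G h y) (\<rho> h v1) (\<rho> h v2) (\<rho> h v3)"
    and g: "g \<in> carrier G"
  shows "A (phi G e \<rho> \<alpha> \<beta> g v1 v2 v3) = phi G e \<rho> \<alpha> \<beta> (conj G h g) (\<rho> h v1) (\<rho> h v2) (\<rho> h v3)"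
proof -
  have grp: "group G" using act by (simp add: lin_action_def)
  let ?S = "{(x,y). x \<in> carrier G \<and> y \<in> carrier G \<and> x \<otimes>\<^bsub>G\<^esub> y = g}"
  let ?T = "{(x,y). x \<in> carrier G \<and> y \<in> carrier G \<and> x \<otimes>\<^bsub>G\<^esub> y = conj G h g}"
  let ?f = "\<lambda>(x,y). (conj G h x, conj G h y)"
  have "A (phi G e \<rho> \<alpha> \<beta> g v1 v2 v3) = (\<Sum>p\<in>?S. A (case p of (x,y) \<Rightarrow> phi_xy e \<rho> \<alpha> \<beta> x y v1 v2 v3))"
    unfolding phi_def by (rule actS_sum[OF add])
  also have "\<dots> = (\<Sum>p\<in>?S. (\<lambda>(x,y). phi_xy e \<rho> \<alpha> \<beta> x y (\<rho> h v1) (\<rho> h v2) (\<rho> h v3)) (?f p))"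
    by (rule sum.cong) (auto simp: xy)
  also have "\<dots> = (\<Sum>p\<in>?T. (\<lambda>(x,y). phi_xy e \<rho> \<alpha> \<beta> x y (\<rho> h v1) (\<rho> h v2) (\<rho> h v3)) p)"
    by (rule sum.reindex_bij_betw[OF conj_bij[OF grp h g]])
  finally show ?thesis unfolding phi_def .
qed

theorem lemma5p1:
  fixes G :: "('g, 'b) monoid_scheme"
    and \<rho> :: "'g \<Rightarrow> complex^'n::finite \<Rightarrow> complex^'n"
    and actS :: "'g \<Rightarrow> 'n symalg \<Rightarrow> 'n symalg"
    and \<beta> \<alpha>L :: "'g \<Rightarrow> complex^'n \<Rightarrow> complex^'n \<Rightarrow> complex^'n"
    and \<alpha>C :: "'g \<Rightarrow> complex^'n \<Rightarrow> complex^'n \<Rightarrow> complex"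
  assumes act: "lin_action G \<rho>"
    and actS: "S_action G \<rho> actS"
    and \<beta>_lin: "\<forall>g\<in>carrier G. alt_bilinV (\<beta> g)"
    and \<beta>_inv: "inv_linear G \<rho> \<beta>"
  shows
    "((\<forall>g\<in>carrier G. alt_bilinV (\<alpha>L g)) \<and> inv_linear G \<rho> \<alpha>L \<longrightarrow>
       (\<forall>h\<in>carrier G. \<forall>x\<in>carrier G. \<forall>y\<in>carrier G. \<forall>v1 v2 v3.
          actS h (phi_xy vecS \<rho> \<alpha>L \<beta> x y v1 v2 v3)
            = phi_xy vecS \<rho> \<alpha>L \<beta> (conj G h x) (conj G h y) (\<rho> h v1) (\<rho> h v2) (\<rho> h v3)) \<and>
       (\<forall>h\<in>carrier G. \<forall>g\<in>carrier G. \<forall>v1 v2 v3.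
          actS h (phi G vecS \<rho> \<alpha>L \<beta> g v1 v2 v3)
            = phi G vecS \<rho> \<alpha>L \<beta> (conj G h g) (\<rho> h v1) (\<rho> h v2) (\<rho> h v3)) \<and>
       (\<forall>h\<in>carrier G. \<forall>g\<in>carrier G. \<forall>v1 v2 v3.
          actS h (psi vecS \<rho> \<alpha>L g v1 v2 v3)
            = psi vecS \<rho> \<alpha>L (conj G h g) (\<rho> h v1) (\<rho> h v2) (\<rho> h v3)))
     \<and>
     ((\<forall>g\<in>carrier G. alt_bilinC (\<alpha>C g)) \<and> inv_const G \<rho> \<alpha>C \<longrightarrow>
       (\<forall>h\<in>carrier G. \<forall>x\<in>carrier G. \<forall>y\<in>carrier G. \<forall>v1 v2 v3.
          actS h (phi_xy constS \<rho> \<alpha>C \<beta> x y v1 v2 v3)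
            = phi_xy constS \<rho> \<alpha>C \<beta> (conj G h x) (conj G h y) (\<rho> h v1) (\<rho> h v2) (\<rho> h v3)) \<and>
       (\<forall>h\<in>carrier G. \<forall>g\<in>carrier G. \<forall>v1 v2 v3.
          actS h (phi G constS \<rho> \<alpha>C \<beta> g v1 v2 v3)
            = phi G constS \<rho> \<alpha>C \<beta> (conj G h g) (\<rho> h v1) (\<rho> h v2) (\<rho> h v3)) \<and>
       (\<forall>h\<in>carrier G. \<forall>g\<in>carrier G. \<forall>v1 v2 v3.
          actS h (psi constS \<rho> \<alpha>C g v1 v2 v3)
            = psi constS \<rho> \<alpha>C (conj G h g) (\<rho> h v1) (\<rho> h v2) (\<rho> h v3)))"
proof -
  have grp: "group G" using act by (simp add: lin_action_def)
  have rlin: "\<And>h. h \<in> carrier G \<Longrightarrow> clinV (\<rho> h)" using act by (simp add: lin_action_def)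
  have SA: "\<And>h. h \<in> carrier G \<Longrightarrow> (\<forall>p q. actS h (p + q) = actS h p + actS h q) \<and>
      (\<forall>p q. actS h (p * q) = actS h p * actS h q) \<and>
      (\<forall>c. actS h (constS c) = constS c) \<and>
      (\<forall>v. actS h (vecS v) = vecS (\<rho> h v))" using actS by (simp add: S_action_def)
  have cc: "\<And>h x. h \<in> carrier G \<Longrightarrow> x \<in> carrier G \<Longrightarrow> conj G h x \<in> carrier G"
    using grp by (simp add: group.subgroup_self subgroup.m_closed group.inv_closed)
  have rr: "\<And>h y v. h \<in> carrier G \<Longrightarrow> y \<in> carrier G \<Longrightarrow> \<rho> h (v + \<rho> y v) = \<rho> h v + \<rho> (conj G h y) (\<rho> h v)"
    using conj_rho[OF act] rlin by (simp add: clin_add)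
  have rd: "\<And>h y v. h \<in> carrier G \<Longrightarrow> y \<in> carrier G \<Longrightarrow> \<rho> h (\<rho> y v - v) = \<rho> (conj G h y) (\<rho> h v) - \<rho> h v"
    using conj_rho[OF act] rlin by (simp add: clin_diff)
  have bi: "\<And>h y v w. h \<in> carrier G \<Longrightarrow> y \<in> carrier G \<Longrightarrow> \<rho> h (\<beta> y v w) = \<beta> (conj G h y) (\<rho> h v) (\<rho> h w)"
    using \<beta>_inv by (simp add: inv_linear_def)
  show ?thesis
  proof (intro conjI impI)
    assume a: "(\<forall>g\<in>carrier G. alt_bilinV (\<alpha>L g)) \<and> inv_linear G \<rho> \<alpha>L"
    have ai: "\<And>h y v w. h \<in> carrier G \<Longrightarrow> y \<in> carrier G \<Longrightarrow> \<rho> h (\<alpha>L y v w) = \<alpha>L (conj G h y) (\<rho> h v) (\<rho> h w)"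
      using a by (simp add: inv_linear_def)
    show XY: "\<forall>h\<in>carrier G. \<forall>x\<in>carrier G. \<forall>y\<in>carrier G. \<forall>v1 v2 v3.
          actS h (phi_xy vecS \<rho> \<alpha>L \<beta> x y v1 v2 v3)
            = phi_xy vecS \<rho> \<alpha>L \<beta> (conj G h x) (conj G h y) (\<rho> h v1) (\<rho> h v2) (\<rho> h v3)"
      using SA by (simp add: phi_xy_def ai rr bi)
    show "\<forall>h\<in>carrier G. \<forall>g\<in>carrier G. \<forall>v1 v2 v3.
          actS h (phi G vecS \<rho> \<alpha>L \<beta> g v1 v2 v3)
            = phi G vecS \<rho> \<alpha>L \<beta> (conj G h g) (\<rho> h v1) (\<rho> h v2) (\<rho> h v3)"
      using XY SA by (blast intro: phi_gen[OF act])
    show "\<forall>h\<in>carrier G. \<forall>g\<in>carrier G. \<forall>v1 v2 v3.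
          actS h (psi vecS \<rho> \<alpha>L g v1 v2 v3)
            = psi vecS \<rho> \<alpha>L (conj G h g) (\<rho> h v1) (\<rho> h v2) (\<rho> h v3)"
      using SA by (simp add: psi_def ai rd)
  next
    assume a: "(\<forall>g\<in>carrier G. alt_bilinC (\<alpha>C g)) \<and> inv_const G \<rho> \<alpha>C"
    have ai: "\<And>h y v w. h \<in> carrier G \<Longrightarrow> y \<in> carrier G \<Longrightarrow> \<alpha>C y v w = \<alpha>C (conj G h y) (\<rho> h v) (\<rho> h w)"
      using a by (simp add: inv_const_def)
    show XY: "\<forall>h\<in>carrier G. \<forall>x\<in>carrier G. \<forall>y\<in>carrier G. \<forall>v1 v2 v3.
          actS h (phi_xy constS \<rho> \<alpha>C \<beta> x y v1 v2 v3)
            = phi_xy constS \<rho> \<alpha>C \<beta> (conj G h x) (conj G h y) (\<rho> h v1) (\<rho> h v2) (\<rho> h v3)"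
      using SA by (simp add: phi_xy_def ai[symmetric] rr[symmetric] bi[symmetric])
    show "\<forall>h\<in>carrier G. \<forall>g\<in>carrier G. \<forall>v1 v2 v3.
          actS h (phi G constS \<rho> \<alpha>C \<beta> g v1 v2 v3)
            = phi G constS \<rho> \<alpha>C \<beta> (conj G h g) (\<rho> h v1) (\<rho> h v2) (\<rho> h v3)"
      using XY SA by (blast intro: phi_gen[OF act])
    show "\<forall>h\<in>carrier G. \<forall>g\<in>carrier G. \<forall>v1 v2 v3.
          actS h (psi constS \<rho> \<alpha>C g v1 v2 v3)
            = psi constS \<rho> \<alpha>C (conj G h g) (\<rho> h v1) (\<rho> h v2) (\<rho> h v3)"
      using SA by (simp add: psi_def ai[symmetric] rd)
  qed
qed

end
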